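(* Let $U=U_1\times\cdots\times U_m\subset\mathbb{R}^m_+$ (each $U_i\subseteq\mathbb{R}$) be a convex set, $C\subseteq\mathbb{R}^m$, $\overline{U}=U\cap C$. Let $\rho_{\rm ro}=\rho(U^\downarrow,\Pi(\overline{U}^\downarrow))$, $\gamma_{\rm ro}=\gamma(U^\downarrow,\Pi(\overline{U}^\downarrow))$, $\rho_{\rm aro}=\rho(U^\downarrow,\overline{U}^\downarrow)$, $\gamma_{\rm aro}=\gamma(U^\downarrow,\overline{U}^\downarrow)$. Then $\rho_{\rm ro}\ge\rho_{\rm aro}$ and $\gamma_{\rm ro}=\gamma_{\rm aro}$.
   Context: For $S\subseteq\mathbb{R}^m_+$, $S^\downarrow=\{t\in\mathbb{R}^m_+:\exists s\in S,\ t\le s\text{ componentwise}\}$. $\Pi_i(S)$ is the projection of $S$ onto coordinate $i$ and $\Pi(S)=\Pi_1(S)\times\cdots\times\Pi_m(S)$. For $r\ge0$, $rS=\{rx:x\in S\}$; $\rho(S_1,S_2)=\max\{\rho\ge0:\rho S_1\subseteq S_2\}$, $\gamma(S_1,S_2)=\min\{\gamma\ge0:S_2\subseteq\gamma S_1\}$. *)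

theory Defs
  imports "HOL-Analysis.Analysis"
begin

definition nonneg_orthant :: "(real^'m) set" where
  "nonneg_orthant = {x. \<forall>i. 0 \<le> x $ i}"

definition down :: "(real^'m) set \<Rightarrow> (real^'m) set" where
  "down S = {t \<in> nonneg_orthant. \<exists>s\<in>S. \<forall>i. t $ i \<le> s $ i}"

definition proj :: "'m \<Rightarrow> (real^'m) set \<Rightarrow> real set" where
  "proj i S = (\<lambda>x. x $ i) ` S"

definition proj_box :: "(real^'m) set \<Rightarrow> (real^'m) set" where
  "proj_box S = {x. \<forall>i. x $ i \<in> proj i S}"

definition scale_set :: "real \<Rightarrow> (real^'m) set \<Rightarrow> (real^'m) set" where
  "scale_set r S = (\<lambda>x. r *\<^sub>R x) ` S"

text \<open>rho and gamma, valued in the extended reals (sup / inf; the inf of the empty set is \<infinity>).\<close>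
definition rho :: "(real^'m) set \<Rightarrow> (real^'m) set \<Rightarrow> ereal" where
  "rho S1 S2 = Sup (ereal ` {r. r \<ge> 0 \<and> scale_set r S1 \<subseteq> S2})"

definition gamma :: "(real^'m) set \<Rightarrow> (real^'m) set \<Rightarrow> ereal" where
  "gamma S1 S2 = Inf (ereal ` {g. g \<ge> 0 \<and> S2 \<subseteq> scale_set g S1})"

end

theory Submission
  imports Defs
begin

lemma W_sub_box: "W \<subseteq> proj_box W"
  unfolding proj_box_def proj_def by auto

lemma box_closed:
  fixes Ucomp :: "'m::finite \<Rightarrow> real set" and U :: "(real^'m) set"
  assumes U_def: "U = {x. \<forall>i. x $ i \<in> Ucomp i}"
    and h: "\<forall>i. \<exists>y\<in>scale_set g (down U). x $ i = y $ i"
  shows "x \<in> scale_set g (down U)"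
proof -
  from h have "\<forall>i. \<exists>d s. d \<in> nonneg_orthant \<and> s \<in> U \<and> (\<forall>j. d $ j \<le> s $ j) \<and> x $ i = g * d $ i"
    unfolding scale_set_def down_def by fastforce
  then obtain d s where ds: "\<And>i. d i \<in> nonneg_orthant \<and> s i \<in> U \<and> (\<forall>j. d i $ j \<le> s i $ j) \<and> x $ i = g * d i $ i"
    by metis
  define d0 where "d0 = (\<chi> i. d i $ i)"
  define s0 where "s0 = (\<chi> i. s i $ i)"
  have "s0 \<in> U" using ds unfolding U_def s0_def by auto
  moreover have "d0 \<in> nonneg_orthant" using ds unfolding d0_def nonneg_orthant_def by auto
  moreover have "\<forall>j. d0 $ j \<le> s0 $ j" using ds unfolding d0_def s0_def by auto
  ultimately have "d0 \<in> down U" unfolding down_def by auto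
  moreover have "x = g *\<^sub>R d0" using ds unfolding d0_def by (simp add: vec_eq_iff)
  ultimately show ?thesis unfolding scale_set_def by auto
qed

theorem corollary6:
  fixes Ucomp :: "'m::finite \<Rightarrow> real set"
    and U C :: "(real^'m) set"
  assumes U_def: "U = {x. \<forall>i. x $ i \<in> Ucomp i}"
    and U_pos: "U \<subseteq> nonneg_orthant"
    and U_convex: "convex U"
  shows "rho (down U) (proj_box (down (U \<inter> C))) \<ge> rho (down U) (down (U \<inter> C))
       \<and> gamma (down U) (proj_box (down (U \<inter> C))) = gamma (down U) (down (U \<inter> C))"
proof
  let ?W = "down (U \<inter> C)"
  have "{r. r \<ge> 0 \<and> scale_set r (down U) \<subseteq> ?W} \<subseteq> {r. r \<ge> 0 \<and> scale_set r (down U) \<subseteq> proj_box ?W}"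
    using W_sub_box[of ?W] by blast
  then show "rho (down U) (proj_box ?W) \<ge> rho (down U) ?W"
    unfolding rho_def by (intro Sup_subset_mono image_mono)
  have "{g. g \<ge> 0 \<and> proj_box ?W \<subseteq> scale_set g (down U)} = {g. g \<ge> 0 \<and> ?W \<subseteq> scale_set g (down U)}"
  proof (intro Collect_cong iffI conjI)
    fix g :: real
    assume a: "g \<ge> 0 \<and> ?W \<subseteq> scale_set g (down U)"
    show "proj_box ?W \<subseteq> scale_set g (down U)"
    proof
      fix x assume "x \<in> proj_box ?W"
      then have "\<forall>i. \<exists>y\<in>scale_set g (down U). x $ i = y $ i"
        using a unfolding proj_box_def proj_def by blast
      then show "x \<in> scale_set g (down U)" using box_closed[OF U_def] by blast
    qed
  qed (use W_sub_box in auto)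
  then show "gamma (down U) (proj_box ?W) = gamma (down U) ?W"
    unfolding gamma_def by simp
qed

end
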